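(* Let $\Theta_4$ have vertices $v_1,v_2$ and edges $e_1,\dots,e_4$, and let $h_{i,j}$ be the half-edge incident on $v_i$ and $e_j$. Define \[A_2=\sum_{\sigma\in\Sigma_4}\mathrm{sgn}(\sigma)(e_1-e_{\sigma(3)})(h_{1,\sigma(1)}-h_{1,1})(h_{2,\sigma(2)}-h_{2,1})\] in the reduced Świątkowski complex of $\Theta_4$ (degree $2$, weight $3$). Then $A_2$ is a cycle, and its class $[A_2]$ generates $H_2(B_3(\Theta_4))$.
   Context: $\Theta_4$ is the graph with two vertices and four edges joining them. The Świątkowski complex of a graph $\Gamma$ is $S(\Gamma)=\mathbb{Z}[E]\otimes\bigotimes_{v\in V}\mathbb{Z}\langle\varnothing,v,h\in H(v)\rangle$ ($H(v)$ the half-edges at $v$, $E$ the edges), bigraded by $|\varnothing|=(0,0)$, $|v|=|e|=(0,1)$, $|h|=(1,1)$ (homological degree, weight), with differential the $\mathbb{Z}[E]$-linear derivation (with Koszul signs, half-edge generators at different vertices anticommuting) determined by $\partial h=e(h)-v(h)$; factors $\varnothing$ are omitted from notation. The reduced complex $\widetilde S(\Gamma)$ replaces each factor by the submodule spanned by $\varnothing$ and the differences of half-edges at $v$; it is quasi-isomorphic to $S(\Gamma)$ when $\Gamma$ has no isolated vertices. The homology of $S(\Gamma)$ in degree $i$ and weight $k$ is naturally isomorphic to $H_i(B_k(\Gamma))$, where $B_k(\Gamma)$ is the unordered configuration space of $k$ points. *)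

theory Defs
  imports "HOL-Combinatorics.Permutations" "HOL-Library.Multiset"
begin

text \<open>Swiatkowski complex S(Theta_4) of the theta graph Theta_4: vertices v_1, v_2,
  edges e_1..e_4 (indexed by naturals 1..4), half-edge h_{i,j} at vertex v_i on edge e_j.

  As an abelian group, S(Theta_4) = Z[E] (x) F_1 (x) F_2 with F_i free on
  {emptyset, v_i, h_{i,1},...,h_{i,4}}. A Z-basis element is a triple (m, s1, s2):
  m is a monomial in Z[E] (a multiset of edge indices), s1 the generator from the
  vertex-v_1 factor, s2 the generator from the vertex-v_2 factor.\<close>

datatype vgen = Empty | Vert | Half nat

type_synonym sbasis = "nat multiset \<times> vgen \<times> vgen"
type_synonym schain = "sbasis \<Rightarrow> int"

definition valid_vgen :: "vgen \<Rightarrow> bool" where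
  "valid_vgen s = (case s of Half j \<Rightarrow> j \<in> {1..4} | _ \<Rightarrow> True)"

definition valid_basis :: "sbasis \<Rightarrow> bool" where
  "valid_basis b = (case b of (m, s1, s2) \<Rightarrow>
      set_mset m \<subseteq> {1..4} \<and> valid_vgen s1 \<and> valid_vgen s2)"

definition hdeg :: "vgen \<Rightarrow> nat" where
  "hdeg s = (case s of Half _ \<Rightarrow> 1 | _ \<Rightarrow> 0)"

definition wdeg :: "vgen \<Rightarrow> nat" where
  "wdeg s = (case s of Empty \<Rightarrow> 0 | _ \<Rightarrow> 1)"

definition bdeg :: "sbasis \<Rightarrow> nat" where
  "bdeg b = (case b of (m, s1, s2) \<Rightarrow> hdeg s1 + hdeg s2)"

definition bweight :: "sbasis \<Rightarrow> nat" where
  "bweight b = (case b of (m, s1, s2) \<Rightarrow> size m + wdeg s1 + wdeg s2)"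

definition supp :: "schain \<Rightarrow> sbasis set" where
  "supp c = {b. c b \<noteq> 0}"

definition chains :: "nat \<Rightarrow> nat \<Rightarrow> schain set" where
  "chains i k = {c. finite (supp c) \<and>
      (\<forall>b \<in> supp c. valid_basis b \<and> bdeg b = i \<and> bweight b = k)}"

definition basis_chain :: "sbasis \<Rightarrow> schain" where
  "basis_chain b = (\<lambda>x. if x = b then 1 else 0)"

text \<open>Differential of a basis element: Z[E]-linear derivation with Koszul signs,
  d(h_{i,j}) = e_j - v_i, d(v_i) = 0, d(e) = 0:
  d(e^m (x) s1 (x) s2) = e^m (d s1 (x) s2 + (-1)^{|s1|} s1 (x) d s2).\<close>
definition dbasis :: "sbasis \<Rightarrow> schain" where
  "dbasis b = (case b of (m, s1, s2) \<Rightarrow> (\<lambda>y.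
      (case s1 of Half j \<Rightarrow>
          basis_chain (m + {#j#}, Empty, s2) y - basis_chain (m, Vert, s2) y
        | _ \<Rightarrow> 0)
    + (case s2 of Half j \<Rightarrow>
          (-1) ^ hdeg s1 * (basis_chain (m + {#j#}, s1, Empty) y - basis_chain (m, s1, Vert) y)
        | _ \<Rightarrow> 0)))"

definition bd :: "schain \<Rightarrow> schain" where
  "bd c = (\<lambda>y. \<Sum>x \<in> supp c. c x * dbasis x y)"

definition tensor3 :: "(nat multiset \<Rightarrow> int) \<Rightarrow> (vgen \<Rightarrow> int) \<Rightarrow> (vgen \<Rightarrow> int) \<Rightarrow> schain" where
  "tensor3 p f g = (\<lambda>(m, s1, s2). p m * f s1 * g s2)"

definition edge :: "nat \<Rightarrow> nat multiset \<Rightarrow> int" where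
  "edge j = (\<lambda>m. if m = {#j#} then 1 else 0)"

definition half :: "nat \<Rightarrow> vgen \<Rightarrow> int" where
  "half j = (\<lambda>s. if s = Half j then 1 else 0)"

definition A2 :: schain where
  "A2 = (\<lambda>b. \<Sum>\<sigma> \<in> {\<sigma>. \<sigma> permutes {1..4::nat}}.
      of_int (sign \<sigma>) *
      tensor3 (\<lambda>m. edge 1 m - edge (\<sigma> 3) m)
              (\<lambda>s. half (\<sigma> 1) s - half 1 s)
              (\<lambda>s. half (\<sigma> 2) s - half 1 s) b)"

end

theory Submission
  imports Defs
begin
lemma perm_empty_set: "{p. p permutes ({}::nat set)} = {id}" by auto
lemma sign_tc: "permutation q \<Longrightarrow> sign (transpose a b \<circ> q) = (if a = b then 1 else -1) * sign q"
  by (simp add: sign_compose permutation_swap_id sign_swap_id)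
lemma perm_tc: "permutation q \<Longrightarrow> permutation (transpose a b \<circ> q)"
  by (simp add: permutation_compose permutation_swap_id)
lemma sumperm4: "sum f {p. p permutes {1..4::nat}} =
  (\<Sum>b1\<in>{1,2,3,4}. \<Sum>b2\<in>{2,3,4}. \<Sum>b3\<in>{3,4}. f (transpose 1 b1 \<circ> (transpose 2 b2 \<circ> (transpose 3 b3 \<circ> (transpose 4 4 \<circ> id)))))"
proof -
  have e: "{1..4::nat} = insert 1 (insert 2 (insert 3 (insert 4 {})))" by auto
  show ?thesis unfolding e
    by (simp add: sum_over_permutations_insert perm_empty_set)
qed
lemma A2_expand: "A2 b = (\<Sum>b1\<in>{1,2,3,4::nat}. \<Sum>b2\<in>{2,3,4::nat}. \<Sum>b3\<in>{3,4::nat}.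
   (let \<sigma> = transpose 1 b1 \<circ> (transpose 2 b2 \<circ> (transpose 3 b3 \<circ> (transpose 4 4 \<circ> id))) in
   of_int (sign \<sigma>) *
      tensor3 (\<lambda>m. edge 1 m - edge (\<sigma> 3) m)
              (\<lambda>s. half (\<sigma> 1) s - half 1 s)
              (\<lambda>s. half (\<sigma> 2) s - half 1 s) b))"
  unfolding A2_def sumperm4 Let_def ..
definition E :: "nat \<Rightarrow> nat \<Rightarrow> nat \<Rightarrow> int" where "E e a c = A2 ({#e#}, Half a, Half c)"
lemma E_tab:
  "E 1 1 1 = 0"
  "E 1 1 2 = 0"
  "E 1 1 3 = 0"
  "E 1 1 4 = 0"
  "E 1 2 1 = 0"
  "E 1 2 2 = 0"
  "E 1 2 3 = (-1)"
  "E 1 2 4 = 1"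
  "E 1 3 1 = 0"
  "E 1 3 2 = 1"
  "E 1 3 3 = 0"
  "E 1 3 4 = (-1)"
  "E 1 4 1 = 0"
  "E 1 4 2 = (-1)"
  "E 1 4 3 = 1"
  "E 1 4 4 = 0"
  "E 2 1 1 = 0"
  "E 2 1 2 = 0"
  "E 2 1 3 = 1"
  "E 2 1 4 = (-1)"
  "E 2 2 1 = 0"
  "E 2 2 2 = 0"
  "E 2 2 3 = 0"
  "E 2 2 4 = 0"
  "E 2 3 1 = (-1)"
  "E 2 3 2 = 0"
  "E 2 3 3 = 0"
  "E 2 3 4 = 1"
  "E 2 4 1 = 1"
  "E 2 4 2 = 0"
  "E 2 4 3 = (-1)"
  "E 2 4 4 = 0"
  "E 3 1 1 = 0"
  "E 3 1 2 = (-1)"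
  "E 3 1 3 = 0"
  "E 3 1 4 = 1"
  "E 3 2 1 = 1"
  "E 3 2 2 = 0"
  "E 3 2 3 = 0"
  "E 3 2 4 = (-1)"
  "E 3 3 1 = 0"
  "E 3 3 2 = 0"
  "E 3 3 3 = 0"
  "E 3 3 4 = 0"
  "E 3 4 1 = (-1)"
  "E 3 4 2 = 1"
  "E 3 4 3 = 0"
  "E 3 4 4 = 0"
  "E 4 1 1 = 0"
  "E 4 1 2 = 1"
  "E 4 1 3 = (-1)"
  "E 4 1 4 = 0"
  "E 4 2 1 = (-1)"
  "E 4 2 2 = 0"
  "E 4 2 3 = 1"
  "E 4 2 4 = 0"
  "E 4 3 1 = 1"
  "E 4 3 2 = (-1)"
  "E 4 3 3 = 0"
  "E 4 3 4 = 0"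
  "E 4 4 1 = 0"
  "E 4 4 2 = 0"
  "E 4 4 3 = 0"
  "E 4 4 4 = 0"
  unfolding E_def A2_expand
  by (simp_all add: tensor3_def edge_def half_def sign_tc perm_tc permutation_swap_id transpose_def sign_swap_id)

definition S :: "sbasis set" where
  "S = (\<lambda>(e,a,c). ({#e#}, Half a, Half c)) ` ({1..4::nat} \<times> {1..4::nat} \<times> {1..4::nat})"

lemma finite_S: "finite S" unfolding S_def by simp

lemma S_props: "b \<in> S \<Longrightarrow> valid_basis b \<and> bdeg b = 2 \<and> bweight b = 3"
  unfolding S_def by (auto simp: valid_basis_def valid_vgen_def bdeg_def hdeg_def bweight_def wdeg_def)

lemma in_S: assumes "valid_basis b" "bdeg b = 2" "bweight b = 3" shows "b \<in> S"
proof -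
  obtain m s1 s2 where b: "b = (m, s1, s2)" by (cases b) auto
  from assms(2) obtain a c where s: "s1 = Half a" "s2 = Half c"
    unfolding b bdeg_def hdeg_def by (auto split: vgen.splits)
  from assms(3) have "size m = 1" unfolding b s bweight_def wdeg_def by simp
  then obtain e where m: "m = {#e#}" using size_1_singleton_mset by blast
  from assms(1) show ?thesis unfolding b s m S_def
    by (auto simp: valid_basis_def valid_vgen_def image_iff)
qed

lemma chains_S: "z \<in> chains 2 3 \<Longrightarrow> supp z \<subseteq> S"
  unfolding chains_def using in_S by auto

lemma A2_supp: assumes "b \<notin> S" shows "A2 b = 0"
proof -
  obtain m s1 s2 where b: "b = (m, s1, s2)" by (cases b) auto
  have "tensor3 (\<lambda>m. edge 1 m - edge (\<sigma> 3) m)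
              (\<lambda>s. half (\<sigma> 1) s - half 1 s)
              (\<lambda>s. half (\<sigma> 2) s - half 1 s) b = 0" if p: "\<sigma> permutes {1..4::nat}" for \<sigma>
  proof -
    have r: "\<sigma> 1 \<in> {1..4}" "\<sigma> 2 \<in> {1..4}" "\<sigma> 3 \<in> {1..4}"
      using permutes_in_image[OF p] by auto
    show ?thesis using assms r unfolding b tensor3_def edge_def half_def S_def
      by (auto simp: image_iff)
  qed
  then show ?thesis unfolding A2_def by simp
qed

lemma A2_chain: "A2 \<in> chains 2 3"
proof -
  have "supp A2 \<subseteq> S" using A2_supp unfolding supp_def by auto
  then show ?thesis unfolding chains_def using finite_S S_props by (auto intro: finite_subset)
qed

lemma dbasis_S: "dbasis ({#e#}, Half a, Half c) y =
   basis_chain (add_mset a {#e#}, Empty, Half c) y - basis_chain ({#e#}, Vert, Half c) y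
   - basis_chain (add_mset c {#e#}, Half a, Empty) y + basis_chain ({#e#}, Half a, Vert) y"
  by (simp add: dbasis_def hdeg_def)

lemma bd_S: assumes "supp z \<subseteq> S"
  shows "bd z y = (\<Sum>e\<in>{1..4}. \<Sum>a\<in>{1..4}. \<Sum>c\<in>{1..4}.
      z ({#e#}, Half a, Half c) * dbasis ({#e#}, Half a, Half c) y)"
proof -
  have "bd z y = (\<Sum>x\<in>S. z x * dbasis x y)"
    unfolding bd_def
    by (rule sum.mono_neutral_left[OF finite_S assms]) (auto simp: supp_def)
  also have "\<dots> = (\<Sum>(e,a,c)\<in>{1..4::nat} \<times> {1..4::nat} \<times> {1..4::nat}.
      z ({#e#}, Half a, Half c) * dbasis ({#e#}, Half a, Half c) y)"
    unfolding S_def by (subst sum.reindex) (auto simp: inj_on_def split_def)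
  also have "\<dots> = (\<Sum>e\<in>{1..4}. \<Sum>a\<in>{1..4}. \<Sum>c\<in>{1..4}.
      z ({#e#}, Half a, Half c) * dbasis ({#e#}, Half a, Half c) y)"
    by (simp add: sum.cartesian_product split_def)
  finally show ?thesis .
qed

lemma I4: "{1..4::nat} = {1,2,3,4}" by auto

lemma pair_eq[simp]: "(add_mset a {#b#} = add_mset c {#d#}) \<longleftrightarrow> (a = c \<and> b = d) \<or> (a = d \<and> b = c)"
  by (auto simp: add_eq_conv_diff)
lemmas bd_S4 = bd_S[unfolded I4]

lemma swap12_zero:
  fixes g :: "nat \<Rightarrow> nat \<Rightarrow> nat \<Rightarrow> int"
  assumes "\<And>e a c. e \<in> I \<Longrightarrow> a \<in> I \<Longrightarrow> c \<in> I \<Longrightarrow> g a e c = - g e a c"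
  shows "(\<Sum>e\<in>I. \<Sum>a\<in>I. \<Sum>c\<in>I. g e a c) = 0"
proof -
  have "(\<Sum>e\<in>I. \<Sum>a\<in>I. \<Sum>c\<in>I. g e a c) = (\<Sum>a\<in>I. \<Sum>e\<in>I. \<Sum>c\<in>I. g e a c)"
    by (rule sum.swap)
  also have "\<dots> = (\<Sum>a\<in>I. \<Sum>e\<in>I. \<Sum>c\<in>I. - g a e c)"
    by (intro sum.cong refl) (auto intro: assms)
  also have "\<dots> = - (\<Sum>a\<in>I. \<Sum>e\<in>I. \<Sum>c\<in>I. g a e c)"
    by (simp add: sum_negf)
  finally show ?thesis by linarith
qed

lemma swap13_zero:
  fixes g :: "nat \<Rightarrow> nat \<Rightarrow> nat \<Rightarrow> int"
  assumes "\<And>e a c. e \<in> I \<Longrightarrow> a \<in> I \<Longrightarrow> c \<in> I \<Longrightarrow> g c a e = - g e a c"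
  shows "(\<Sum>e\<in>I. \<Sum>a\<in>I. \<Sum>c\<in>I. g e a c) = 0"
proof -
  have "(\<Sum>e\<in>I. \<Sum>a\<in>I. \<Sum>c\<in>I. g e a c) = (\<Sum>e\<in>I. \<Sum>c\<in>I. \<Sum>a\<in>I. g e a c)"
    by (intro sum.cong refl sum.swap)
  also have "\<dots> = (\<Sum>c\<in>I. \<Sum>e\<in>I. \<Sum>a\<in>I. g e a c)"
    by (rule sum.swap)
  also have "\<dots> = (\<Sum>c\<in>I. \<Sum>a\<in>I. \<Sum>e\<in>I. g e a c)"
    by (intro sum.cong refl sum.swap)
  also have "\<dots> = (\<Sum>c\<in>I. \<Sum>a\<in>I. \<Sum>e\<in>I. - g c a e)"
    by (intro sum.cong refl) (auto intro: assms)
  also have "\<dots> = - (\<Sum>c\<in>I. \<Sum>a\<in>I. \<Sum>e\<in>I. g c a e)"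
    by (simp add: sum_negf)
  finally show ?thesis by linarith
qed

lemma rowa_zero:
  fixes f :: "nat \<Rightarrow> nat \<Rightarrow> nat \<Rightarrow> int"
  assumes "\<And>e c. e \<in> I \<Longrightarrow> c \<in> I \<Longrightarrow> (\<Sum>a\<in>I. f e a c) = 0"
  shows "(\<Sum>e\<in>I. \<Sum>a\<in>I. \<Sum>c\<in>I. f e a c * h e c) = 0"
proof -
  have "(\<Sum>e\<in>I. \<Sum>a\<in>I. \<Sum>c\<in>I. f e a c * h e c) = (\<Sum>e\<in>I. \<Sum>c\<in>I. \<Sum>a\<in>I. f e a c * h e c)"
    by (intro sum.cong refl sum.swap)
  also have "\<dots> = (\<Sum>e\<in>I. \<Sum>c\<in>I. (\<Sum>a\<in>I. f e a c) * h e c)"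
    by (simp add: sum_distrib_right)
  also have "\<dots> = 0" by (simp add: assms)
  finally show ?thesis .
qed

lemma rowc_zero:
  fixes f :: "nat \<Rightarrow> nat \<Rightarrow> nat \<Rightarrow> int"
  assumes "\<And>e a. e \<in> I \<Longrightarrow> a \<in> I \<Longrightarrow> (\<Sum>c\<in>I. f e a c) = 0"
  shows "(\<Sum>e\<in>I. \<Sum>a\<in>I. \<Sum>c\<in>I. f e a c * h e a) = 0"
proof -
  have "(\<Sum>e\<in>I. \<Sum>a\<in>I. \<Sum>c\<in>I. f e a c * h e a) = (\<Sum>e\<in>I. \<Sum>a\<in>I. (\<Sum>c\<in>I. f e a c) * h e a)"
    by (simp add: sum_distrib_right)
  also have "\<dots> = 0" by (simp add: assms)
  finally show ?thesis .
qed

lemma cycle_of_props: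
  assumes s: "supp z \<subseteq> S"
    and a12: "\<And>e a c. e \<in> {1..4} \<Longrightarrow> a \<in> {1..4} \<Longrightarrow> c \<in> {1..4} \<Longrightarrow>
       z ({#a#}, Half e, Half c) = - z ({#e#}, Half a, Half c)"
    and a13: "\<And>e a c. e \<in> {1..4} \<Longrightarrow> a \<in> {1..4} \<Longrightarrow> c \<in> {1..4} \<Longrightarrow>
       z ({#c#}, Half a, Half e) = - z ({#e#}, Half a, Half c)"
    and ra: "\<And>e c. e \<in> {1..4} \<Longrightarrow> c \<in> {1..4} \<Longrightarrow> (\<Sum>a\<in>{1..4}. z ({#e#}, Half a, Half c)) = 0"
    and rc: "\<And>e a. e \<in> {1..4} \<Longrightarrow> a \<in> {1..4} \<Longrightarrow> (\<Sum>c\<in>{1..4}. z ({#e#}, Half a, Half c)) = 0"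
  shows "bd z y = 0"
proof -
  let ?I = "{1..4::nat}"
  let ?Z = "\<lambda>e a c. z ({#e#}, Half a, Half c)"
  have t1: "(\<Sum>e\<in>?I. \<Sum>a\<in>?I. \<Sum>c\<in>?I. ?Z e a c * basis_chain (add_mset a {#e#}, Empty, Half c) y) = 0"
    apply (rule swap12_zero)
    subgoal for e a c using a12[of e a c] by (simp add: add_mset_commute)
    done
  have t3: "(\<Sum>e\<in>?I. \<Sum>a\<in>?I. \<Sum>c\<in>?I. ?Z e a c * basis_chain (add_mset c {#e#}, Half a, Empty) y) = 0"
    apply (rule swap13_zero)
    subgoal for e a c using a13[of e a c] by (simp add: add_mset_commute)
    done
  have t2: "(\<Sum>e\<in>?I. \<Sum>a\<in>?I. \<Sum>c\<in>?I. ?Z e a c * basis_chain ({#e#}, Vert, Half c) y) = 0"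
    by (rule rowa_zero[where f = ?Z]) (blast intro: ra)
  have t4: "(\<Sum>e\<in>?I. \<Sum>a\<in>?I. \<Sum>c\<in>?I. ?Z e a c * basis_chain ({#e#}, Half a, Vert) y) = 0"
    by (rule rowc_zero[where f = ?Z]) (blast intro: rc)
  have "bd z y = (\<Sum>e\<in>?I. \<Sum>a\<in>?I. \<Sum>c\<in>?I. ?Z e a c * basis_chain (add_mset a {#e#}, Empty, Half c) y)
     - (\<Sum>e\<in>?I. \<Sum>a\<in>?I. \<Sum>c\<in>?I. ?Z e a c * basis_chain ({#e#}, Vert, Half c) y)
     - (\<Sum>e\<in>?I. \<Sum>a\<in>?I. \<Sum>c\<in>?I. ?Z e a c * basis_chain (add_mset c {#e#}, Half a, Empty) y)
     + (\<Sum>e\<in>?I. \<Sum>a\<in>?I. \<Sum>c\<in>?I. ?Z e a c * basis_chain ({#e#}, Half a, Vert) y)"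
    unfolding bd_S[OF s] dbasis_S
    by (simp add: sum.distrib sum_subtractf algebra_simps)
  then show ?thesis using t1 t2 t3 t4 by simp
qed

lemma A2_supp': "supp A2 \<subseteq> S" using A2_supp unfolding supp_def by auto

lemma bdA2: "bd A2 = (\<lambda>_. 0)"
proof
  fix y
  have E': "\<And>e a c. A2 ({#e#}, Half a, Half c) = E e a c" by (simp add: E_def)
  show "bd A2 y = 0"
  proof (rule cycle_of_props[OF A2_supp'], unfold E' I4)
    fix e a c :: nat assume "e \<in> {1,2,3,4}" "a \<in> {1,2,3,4}" "c \<in> {1,2,3,4}"
    then show "E a e c = - E e a c" "E c a e = - E e a c" by (auto simp: E_tab E_tab[unfolded One_nat_def])
  next
    fix e c :: nat assume "e \<in> {1,2,3,4}" "c \<in> {1,2,3,4}"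
    then show "(\<Sum>a\<in>{1,2,3,4}. E e a c) = 0" by (auto simp: E_tab E_tab[unfolded One_nat_def])
  next
    fix e a :: nat assume "e \<in> {1,2,3,4}" "a \<in> {1,2,3,4}"
    then show "(\<Sum>c\<in>{1,2,3,4}. E e a c) = 0" by (auto simp: E_tab E_tab[unfolded One_nat_def])
  qed
qed

lemma zero_chain: "(\<lambda>_. 0) \<in> chains 3 3" "bd (\<lambda>_. 0) = (\<lambda>_. 0)"
  by (auto simp: chains_def supp_def bd_def)

lemma kernel:
  assumes zc: "z \<in> chains 2 3" and bz: "bd z = (\<lambda>_. 0)"
  shows "\<exists>n::int. \<forall>b. z b = n * A2 b"
proof -
  have s: "supp z \<subseteq> S" using chains_S[OF zc] .
  define n where "n = - z ({#4#}, Half 3, Half 2)"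
  have k0: "z ({#4#}, Half 3, Half 2) = (-1) * n" unfolding n_def by simp
  have q1: "z ({#1#}, Half 1, Half 1) = 0"
  proof -
    have "bd z (add_mset 1 {#1#}, Empty, Half 1) = 0" using bz by simp
    then show ?thesis  unfolding bd_S4[OF s] One_nat_def by (simp add: dbasis_S basis_chain_def, linarith?)
  qed
  have q2: "z ({#1#}, Half 1, Half 2) = 0"
  proof -
    have "bd z (add_mset 1 {#1#}, Empty, Half 2) = 0" using bz by simp
    then show ?thesis  unfolding bd_S4[OF s] One_nat_def by (simp add: dbasis_S basis_chain_def, linarith?)
  qed
  have q3: "z ({#2#}, Half 1, Half 1) = 0"
  proof -
    have "bd z (add_mset 2 {#1#}, Half 1, Empty) = 0" using bz by simp
    then show ?thesis using q2 unfolding bd_S4[OF s] One_nat_def by (simp add: dbasis_S basis_chain_def, linarith?)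
  qed
  have q4: "z ({#1#}, Half 1, Half 3) = 0"
  proof -
    have "bd z (add_mset 1 {#1#}, Empty, Half 3) = 0" using bz by simp
    then show ?thesis  unfolding bd_S4[OF s] One_nat_def by (simp add: dbasis_S basis_chain_def, linarith?)
  qed
  have q5: "z ({#3#}, Half 1, Half 1) = 0"
  proof -
    have "bd z (add_mset 3 {#1#}, Half 1, Empty) = 0" using bz by simp
    then show ?thesis using q4 unfolding bd_S4[OF s] One_nat_def by (simp add: dbasis_S basis_chain_def, linarith?)
  qed
  have q6: "z ({#1#}, Half 1, Half 4) = 0"
  proof -
    have "bd z (add_mset 1 {#1#}, Empty, Half 4) = 0" using bz by simp
    then show ?thesis  unfolding bd_S4[OF s] One_nat_def by (simp add: dbasis_S basis_chain_def, linarith?)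
  qed
  have q7: "z ({#4#}, Half 1, Half 1) = 0"
  proof -
    have "bd z (add_mset 4 {#1#}, Half 1, Empty) = 0" using bz by simp
    then show ?thesis using q6 unfolding bd_S4[OF s] One_nat_def by (simp add: dbasis_S basis_chain_def, linarith?)
  qed
  have q8: "z ({#1#}, Half 2, Half 1) = 0"
  proof -
    have "bd z (add_mset 2 {#1#}, Empty, Half 1) = 0" using bz by simp
    then show ?thesis using q3 unfolding bd_S4[OF s] One_nat_def by (simp add: dbasis_S basis_chain_def, linarith?)
  qed
  have q9: "z ({#1#}, Half 3, Half 1) = 0"
  proof -
    have "bd z (add_mset 3 {#1#}, Empty, Half 1) = 0" using bz by simp
    then show ?thesis using q5 unfolding bd_S4[OF s] One_nat_def by (simp add: dbasis_S basis_chain_def, linarith?)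
  qed
  have q10: "z ({#1#}, Half 4, Half 1) = 0"
  proof -
    have "bd z (add_mset 4 {#1#}, Empty, Half 1) = 0" using bz by simp
    then show ?thesis using q7 unfolding bd_S4[OF s] One_nat_def by (simp add: dbasis_S basis_chain_def, linarith?)
  qed
  have q11: "z ({#2#}, Half 1, Half 2) = 0"
  proof -
    have "bd z (add_mset 2 {#2#}, Half 1, Empty) = 0" using bz by simp
    then show ?thesis  unfolding bd_S4[OF s] One_nat_def by (simp add: dbasis_S basis_chain_def, linarith?)
  qed
  have q12: "z ({#2#}, Half 2, Half 1) = 0"
  proof -
    have "bd z (add_mset 2 {#2#}, Empty, Half 1) = 0" using bz by simp
    then show ?thesis  unfolding bd_S4[OF s] One_nat_def by (simp add: dbasis_S basis_chain_def, linarith?)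
  qed
  have q13: "z ({#2#}, Half 2, Half 2) = 0"
  proof -
    have "bd z (add_mset 2 {#2#}, Empty, Half 2) = 0" using bz by simp
    then show ?thesis  unfolding bd_S4[OF s] One_nat_def by (simp add: dbasis_S basis_chain_def, linarith?)
  qed
  have q14: "z ({#2#}, Half 2, Half 3) = 0"
  proof -
    have "bd z (add_mset 2 {#2#}, Empty, Half 3) = 0" using bz by simp
    then show ?thesis  unfolding bd_S4[OF s] One_nat_def by (simp add: dbasis_S basis_chain_def, linarith?)
  qed
  have q15: "z ({#3#}, Half 2, Half 2) = 0"
  proof -
    have "bd z (add_mset 3 {#2#}, Half 2, Empty) = 0" using bz by simp
    then show ?thesis using q14 unfolding bd_S4[OF s] One_nat_def by (simp add: dbasis_S basis_chain_def, linarith?)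
  qed
  have q16: "z ({#2#}, Half 2, Half 4) = 0"
  proof -
    have "bd z (add_mset 2 {#2#}, Empty, Half 4) = 0" using bz by simp
    then show ?thesis  unfolding bd_S4[OF s] One_nat_def by (simp add: dbasis_S basis_chain_def, linarith?)
  qed
  have q17: "z ({#4#}, Half 2, Half 2) = 0"
  proof -
    have "bd z (add_mset 4 {#2#}, Half 2, Empty) = 0" using bz by simp
    then show ?thesis using q16 unfolding bd_S4[OF s] One_nat_def by (simp add: dbasis_S basis_chain_def, linarith?)
  qed
  have q18: "z ({#2#}, Half 3, Half 2) = 0"
  proof -
    have "bd z (add_mset 3 {#2#}, Empty, Half 2) = 0" using bz by simp
    then show ?thesis using q15 unfolding bd_S4[OF s] One_nat_def by (simp add: dbasis_S basis_chain_def, linarith?)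
  qed
  have q19: "z ({#2#}, Half 3, Half 4) = 1 * n"
  proof -
    have "bd z (add_mset 4 {#2#}, Half 3, Empty) = 0" using bz by simp
    then show ?thesis using k0 unfolding bd_S4[OF s] One_nat_def by (simp add: dbasis_S basis_chain_def, linarith?)
  qed
  have q20: "z ({#2#}, Half 4, Half 2) = 0"
  proof -
    have "bd z (add_mset 4 {#2#}, Empty, Half 2) = 0" using bz by simp
    then show ?thesis using q17 unfolding bd_S4[OF s] One_nat_def by (simp add: dbasis_S basis_chain_def, linarith?)
  qed
  have q21: "z ({#3#}, Half 1, Half 3) = 0"
  proof -
    have "bd z (add_mset 3 {#3#}, Half 1, Empty) = 0" using bz by simp
    then show ?thesis  unfolding bd_S4[OF s] One_nat_def by (simp add: dbasis_S basis_chain_def, linarith?)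
  qed
  have q22: "z ({#3#}, Half 2, Half 3) = 0"
  proof -
    have "bd z (add_mset 3 {#3#}, Half 2, Empty) = 0" using bz by simp
    then show ?thesis  unfolding bd_S4[OF s] One_nat_def by (simp add: dbasis_S basis_chain_def, linarith?)
  qed
  have q23: "z ({#3#}, Half 3, Half 1) = 0"
  proof -
    have "bd z (add_mset 3 {#3#}, Empty, Half 1) = 0" using bz by simp
    then show ?thesis  unfolding bd_S4[OF s] One_nat_def by (simp add: dbasis_S basis_chain_def, linarith?)
  qed
  have q24: "z ({#3#}, Half 3, Half 2) = 0"
  proof -
    have "bd z (add_mset 3 {#3#}, Empty, Half 2) = 0" using bz by simp
    then show ?thesis  unfolding bd_S4[OF s] One_nat_def by (simp add: dbasis_S basis_chain_def, linarith?)
  qed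
  have q25: "z ({#3#}, Half 3, Half 3) = 0"
  proof -
    have "bd z (add_mset 3 {#3#}, Empty, Half 3) = 0" using bz by simp
    then show ?thesis  unfolding bd_S4[OF s] One_nat_def by (simp add: dbasis_S basis_chain_def, linarith?)
  qed
  have q26: "z ({#3#}, Half 3, Half 4) = 0"
  proof -
    have "bd z (add_mset 3 {#3#}, Empty, Half 4) = 0" using bz by simp
    then show ?thesis  unfolding bd_S4[OF s] One_nat_def by (simp add: dbasis_S basis_chain_def, linarith?)
  qed
  have q27: "z ({#4#}, Half 3, Half 3) = 0"
  proof -
    have "bd z (add_mset 4 {#3#}, Half 3, Empty) = 0" using bz by simp
    then show ?thesis using q26 unfolding bd_S4[OF s] One_nat_def by (simp add: dbasis_S basis_chain_def, linarith?)
  qed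
  have q28: "z ({#3#}, Half 4, Half 2) = 1 * n"
  proof -
    have "bd z (add_mset 4 {#3#}, Empty, Half 2) = 0" using bz by simp
    then show ?thesis using k0 unfolding bd_S4[OF s] One_nat_def by (simp add: dbasis_S basis_chain_def, linarith?)
  qed
  have q29: "z ({#3#}, Half 4, Half 3) = 0"
  proof -
    have "bd z (add_mset 4 {#3#}, Empty, Half 3) = 0" using bz by simp
    then show ?thesis using q27 unfolding bd_S4[OF s] One_nat_def by (simp add: dbasis_S basis_chain_def, linarith?)
  qed
  have q30: "z ({#4#}, Half 1, Half 4) = 0"
  proof -
    have "bd z (add_mset 4 {#4#}, Half 1, Empty) = 0" using bz by simp
    then show ?thesis  unfolding bd_S4[OF s] One_nat_def by (simp add: dbasis_S basis_chain_def, linarith?)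
  qed
  have q31: "z ({#4#}, Half 2, Half 4) = 0"
  proof -
    have "bd z (add_mset 4 {#4#}, Half 2, Empty) = 0" using bz by simp
    then show ?thesis  unfolding bd_S4[OF s] One_nat_def by (simp add: dbasis_S basis_chain_def, linarith?)
  qed
  have q32: "z ({#4#}, Half 3, Half 4) = 0"
  proof -
    have "bd z (add_mset 4 {#4#}, Half 3, Empty) = 0" using bz by simp
    then show ?thesis  unfolding bd_S4[OF s] One_nat_def by (simp add: dbasis_S basis_chain_def, linarith?)
  qed
  have q33: "z ({#4#}, Half 4, Half 1) = 0"
  proof -
    have "bd z (add_mset 4 {#4#}, Empty, Half 1) = 0" using bz by simp
    then show ?thesis  unfolding bd_S4[OF s] One_nat_def by (simp add: dbasis_S basis_chain_def, linarith?)
  qed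
  have q34: "z ({#4#}, Half 4, Half 2) = 0"
  proof -
    have "bd z (add_mset 4 {#4#}, Empty, Half 2) = 0" using bz by simp
    then show ?thesis  unfolding bd_S4[OF s] One_nat_def by (simp add: dbasis_S basis_chain_def, linarith?)
  qed
  have q35: "z ({#4#}, Half 4, Half 3) = 0"
  proof -
    have "bd z (add_mset 4 {#4#}, Empty, Half 3) = 0" using bz by simp
    then show ?thesis  unfolding bd_S4[OF s] One_nat_def by (simp add: dbasis_S basis_chain_def, linarith?)
  qed
  have q36: "z ({#4#}, Half 4, Half 4) = 0"
  proof -
    have "bd z (add_mset 4 {#4#}, Empty, Half 4) = 0" using bz by simp
    then show ?thesis  unfolding bd_S4[OF s] One_nat_def by (simp add: dbasis_S basis_chain_def, linarith?)
  qed
  have q37: "z ({#3#}, Half 1, Half 2) = (-1) * n"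
  proof -
    have "bd z ({#3#}, Vert, Half 2) = 0" using bz by simp
    then show ?thesis using q15 q24 q28 unfolding bd_S4[OF s] One_nat_def by (simp add: dbasis_S basis_chain_def, linarith?)
  qed
  have q38: "z ({#3#}, Half 1, Half 4) = 1 * n"
  proof -
    have "bd z ({#3#}, Half 1, Vert) = 0" using bz by simp
    then show ?thesis using q21 q5 q37 unfolding bd_S4[OF s] One_nat_def by (simp add: dbasis_S basis_chain_def, linarith?)
  qed
  have q39: "z ({#4#}, Half 1, Half 2) = 1 * n"
  proof -
    have "bd z ({#4#}, Vert, Half 2) = 0" using bz by simp
    then show ?thesis using q34 k0 q17 unfolding bd_S4[OF s] One_nat_def by (simp add: dbasis_S basis_chain_def, linarith?)
  qed
  have q40: "z ({#4#}, Half 1, Half 3) = (-1) * n"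
  proof -
    have "bd z ({#4#}, Half 1, Vert) = 0" using bz by simp
    then show ?thesis using q30 q7 q39 unfolding bd_S4[OF s] One_nat_def by (simp add: dbasis_S basis_chain_def, linarith?)
  qed
  have q41: "z ({#4#}, Half 3, Half 1) = 1 * n"
  proof -
    have "bd z ({#4#}, Half 3, Vert) = 0" using bz by simp
    then show ?thesis using k0 q27 q32 unfolding bd_S4[OF s] One_nat_def by (simp add: dbasis_S basis_chain_def, linarith?)
  qed
  have q42: "z ({#1#}, Half 2, Half 2) = 0"
  proof -
    have "bd z (add_mset 2 {#1#}, Empty, Half 2) = 0" using bz by simp
    then show ?thesis using q11 unfolding bd_S4[OF s] One_nat_def by (simp add: dbasis_S basis_chain_def, linarith?)
  qed
  have q43: "z ({#1#}, Half 3, Half 2) = 1 * n"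
  proof -
    have "bd z (add_mset 3 {#1#}, Empty, Half 2) = 0" using bz by simp
    then show ?thesis using q37 unfolding bd_S4[OF s] One_nat_def by (simp add: dbasis_S basis_chain_def, linarith?)
  qed
  have q44: "z ({#2#}, Half 3, Half 1) = (-1) * n"
  proof -
    have "bd z (add_mset 2 {#1#}, Half 3, Empty) = 0" using bz by simp
    then show ?thesis using q43 unfolding bd_S4[OF s] One_nat_def by (simp add: dbasis_S basis_chain_def, linarith?)
  qed
  have q45: "z ({#1#}, Half 3, Half 3) = 0"
  proof -
    have "bd z (add_mset 3 {#1#}, Empty, Half 3) = 0" using bz by simp
    then show ?thesis using q21 unfolding bd_S4[OF s] One_nat_def by (simp add: dbasis_S basis_chain_def, linarith?)
  qed
  have q46: "z ({#1#}, Half 3, Half 4) = (-1) * n"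
  proof -
    have "bd z (add_mset 3 {#1#}, Empty, Half 4) = 0" using bz by simp
    then show ?thesis using q38 unfolding bd_S4[OF s] One_nat_def by (simp add: dbasis_S basis_chain_def, linarith?)
  qed
  have q47: "z ({#1#}, Half 4, Half 2) = (-1) * n"
  proof -
    have "bd z (add_mset 4 {#1#}, Empty, Half 2) = 0" using bz by simp
    then show ?thesis using q39 unfolding bd_S4[OF s] One_nat_def by (simp add: dbasis_S basis_chain_def, linarith?)
  qed
  have q48: "z ({#2#}, Half 4, Half 1) = 1 * n"
  proof -
    have "bd z (add_mset 2 {#1#}, Half 4, Empty) = 0" using bz by simp
    then show ?thesis using q47 unfolding bd_S4[OF s] One_nat_def by (simp add: dbasis_S basis_chain_def, linarith?)
  qed
  have q49: "z ({#1#}, Half 4, Half 3) = 1 * n"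
  proof -
    have "bd z (add_mset 4 {#1#}, Empty, Half 3) = 0" using bz by simp
    then show ?thesis using q40 unfolding bd_S4[OF s] One_nat_def by (simp add: dbasis_S basis_chain_def, linarith?)
  qed
  have q50: "z ({#3#}, Half 4, Half 1) = (-1) * n"
  proof -
    have "bd z (add_mset 3 {#1#}, Half 4, Empty) = 0" using bz by simp
    then show ?thesis using q49 unfolding bd_S4[OF s] One_nat_def by (simp add: dbasis_S basis_chain_def, linarith?)
  qed
  have q51: "z ({#1#}, Half 4, Half 4) = 0"
  proof -
    have "bd z (add_mset 4 {#1#}, Empty, Half 4) = 0" using bz by simp
    then show ?thesis using q30 unfolding bd_S4[OF s] One_nat_def by (simp add: dbasis_S basis_chain_def, linarith?)
  qed
  have q52: "z ({#2#}, Half 1, Half 3) = 1 * n"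
  proof -
    have "bd z (add_mset 3 {#2#}, Half 1, Empty) = 0" using bz by simp
    then show ?thesis using q37 unfolding bd_S4[OF s] One_nat_def by (simp add: dbasis_S basis_chain_def, linarith?)
  qed
  have q53: "z ({#2#}, Half 1, Half 4) = (-1) * n"
  proof -
    have "bd z (add_mset 4 {#2#}, Half 1, Empty) = 0" using bz by simp
    then show ?thesis using q39 unfolding bd_S4[OF s] One_nat_def by (simp add: dbasis_S basis_chain_def, linarith?)
  qed
  have q54: "z ({#3#}, Half 2, Half 1) = 1 * n"
  proof -
    have "bd z (add_mset 3 {#2#}, Empty, Half 1) = 0" using bz by simp
    then show ?thesis using q44 unfolding bd_S4[OF s] One_nat_def by (simp add: dbasis_S basis_chain_def, linarith?)
  qed
  have q55: "z ({#2#}, Half 3, Half 3) = 0"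
  proof -
    have "bd z (add_mset 3 {#2#}, Empty, Half 3) = 0" using bz by simp
    then show ?thesis using q22 unfolding bd_S4[OF s] One_nat_def by (simp add: dbasis_S basis_chain_def, linarith?)
  qed
  have q56: "z ({#3#}, Half 2, Half 4) = (-1) * n"
  proof -
    have "bd z (add_mset 3 {#2#}, Empty, Half 4) = 0" using bz by simp
    then show ?thesis using q19 unfolding bd_S4[OF s] One_nat_def by (simp add: dbasis_S basis_chain_def, linarith?)
  qed
  have q57: "z ({#4#}, Half 2, Half 1) = (-1) * n"
  proof -
    have "bd z (add_mset 4 {#2#}, Empty, Half 1) = 0" using bz by simp
    then show ?thesis using q48 unfolding bd_S4[OF s] One_nat_def by (simp add: dbasis_S basis_chain_def, linarith?)
  qed
  have q58: "z ({#2#}, Half 4, Half 3) = (-1) * n"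
  proof -
    have "bd z (add_mset 3 {#2#}, Half 4, Empty) = 0" using bz by simp
    then show ?thesis using q28 unfolding bd_S4[OF s] One_nat_def by (simp add: dbasis_S basis_chain_def, linarith?)
  qed
  have q59: "z ({#2#}, Half 4, Half 4) = 0"
  proof -
    have "bd z (add_mset 4 {#2#}, Empty, Half 4) = 0" using bz by simp
    then show ?thesis using q31 unfolding bd_S4[OF s] One_nat_def by (simp add: dbasis_S basis_chain_def, linarith?)
  qed
  have q60: "z ({#4#}, Half 2, Half 3) = 1 * n"
  proof -
    have "bd z (add_mset 4 {#3#}, Half 2, Empty) = 0" using bz by simp
    then show ?thesis using q56 unfolding bd_S4[OF s] One_nat_def by (simp add: dbasis_S basis_chain_def, linarith?)
  qed
  have q61: "z ({#3#}, Half 4, Half 4) = 0"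
  proof -
    have "bd z (add_mset 4 {#3#}, Empty, Half 4) = 0" using bz by simp
    then show ?thesis using q32 unfolding bd_S4[OF s] One_nat_def by (simp add: dbasis_S basis_chain_def, linarith?)
  qed
  have q62: "z ({#1#}, Half 2, Half 3) = (-1) * n"
  proof -
    have "bd z ({#1#}, Vert, Half 3) = 0" using bz by simp
    then show ?thesis using q4 q49 q45 unfolding bd_S4[OF s] One_nat_def by (simp add: dbasis_S basis_chain_def, linarith?)
  qed
  have q63: "z ({#1#}, Half 2, Half 4) = 1 * n"
  proof -
    have "bd z ({#1#}, Vert, Half 4) = 0" using bz by simp
    then show ?thesis using q6 q51 q46 unfolding bd_S4[OF s] One_nat_def by (simp add: dbasis_S basis_chain_def, linarith?)
  qed
  note vals = k0 q1 q2 q3 q4 q5 q6 q7 q8 q9 q10 q11 q12 q13 q14 q15 q16 q17 q18 q19 q20 q21 q22 q23 q24 q25 q26 q27 q28 q29 q30 q31 q32 q33 q34 q35 q36 q37 q38 q39 q40 q41 q42 q43 q44 q45 q46 q47 q48 q49 q50 q51 q52 q53 q54 q55 q56 q57 q58 q59 q60 q61 q62 q63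
  have "z b = n * A2 b" for b
  proof (cases "b \<in> S")
    case False
    then have "z b = 0" using s unfolding supp_def by auto
    then show ?thesis using A2_supp[OF False] by simp
  next
    case True
    then obtain e a c where b: "b = ({#e#}, Half a, Half c)" and r: "e \<in> {1,2,3,4}" "a \<in> {1,2,3,4}" "c \<in> {1,2,3,4}"
      unfolding S_def I4 by auto
    have "A2 b = E e a c" unfolding b E_def ..
    then show ?thesis using r unfolding b by (auto simp: E_tab E_tab[unfolded One_nat_def] vals vals[unfolded One_nat_def])
  qed
  then show ?thesis by blast
qed

theorem mainTheorem4:
  shows "A2 \<in> chains 2 3 \<and> bd A2 = (\<lambda>_. 0) \<and>
    (\<forall>z \<in> chains 2 3. bd z = (\<lambda>_. 0) \<longrightarrow>
       (\<exists>n::int. \<exists>d \<in> chains 3 3. (\<lambda>b. z b - n * A2 b) = bd d))"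
proof (intro conjI ballI impI)
  show "A2 \<in> chains 2 3" by (rule A2_chain)
  show "bd A2 = (\<lambda>_. 0)" by (rule bdA2)
  fix z assume "z \<in> chains 2 3" "bd z = (\<lambda>_. 0)"
  then obtain n where "\<forall>b. z b = n * A2 b" using kernel by blast
  then have "(\<lambda>b. z b - n * A2 b) = bd (\<lambda>_. 0)" using zero_chain(2) by auto
  then show "\<exists>n::int. \<exists>d \<in> chains 3 3. (\<lambda>b. z b - n * A2 b) = bd d" using zero_chain(1) by blast
qed

end
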